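(* There is no universal distributed algorithm that elects a leader for all feasible configurations of size $4$; that is, there is no pair $(D,f)$ of a DRIP $D$ and a decision function $f$ such that $(D,f)$ is a dedicated leader election algorithm for every feasible configuration with $4$ nodes.
   Context: Model. A configuration is a finite simple undirected connected graph $G$ in which each node $v$ is tagged with a non-negative integer $t_v$ (wakeup tag); size = number of nodes. Nodes are anonymous and communicate in synchronous global rounds. A node $v$ wakes up in the first global round $r\le t_v$ in which it receives a message, if any, and otherwise in global round $t_v$; its local clock is $0$ in its wakeup round, it acts from local round $1$, and nodes do not know the global clock. In each round a node transmits a message to all neighbours, listens, or terminates. A listening node receives $M$ if exactly one neighbour transmits ($M$), hears collision noise (distinct from silence and messages) if at least two neighbours transmit, and silence otherwise; a transmitting node hears nothing. The history $\mathcal H_v[i]$ of $v$ in local round $i$ is $(\emptyset)$ (transmitted, silence, or spontaneous wakeup at $i=0$), $(M)$ (received $M$, or woken by $M$ at $i=0$), or $( * )$ (collision). A DRIP is a function $D$ from finite history vectors to $\{\mathit{listen},\mathit{transmit}(M),\mathit{terminate}\}$; each node $v$ in local round $i\ge1$ performs $D(\mathcal H_v[0\ldots i-1])$, and every node eventually terminates permanently (first at local round $done_v$). A decision function $f$ maps $\mathcal H_v[0\ldots done_v]$ to $\{0,1\}$; $(D,f)$ is a dedicated leader election algorithm for $G$ if, when all nodes of $G$ execute $D$, exactly one node gets output $1$; $G$ is feasible if such a pair exists. *)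

theory Defs
  imports Main
begin

(* Radio-network model of the paper.  Nodes are named by natural numbers (names are
   invisible to the algorithm), messages are natural numbers. *)

datatype 'm hent = HEmpty | HMsg 'm | HColl

datatype 'm act = Listen | Transmit 'm | Terminate

datatype 'm nstate = Asleep | Awake "'m hent list" | Done "'m hent list"

type_synonym drip = "nat hent list \<Rightarrow> nat act"

(* a decision function maps H[0..done] to {0,1}; True encodes output 1 *)
type_synonym decision = "nat hent list \<Rightarrow> bool"

definition config :: "nat set \<Rightarrow> (nat \<Rightarrow> nat \<Rightarrow> bool) \<Rightarrow> bool" where
  "config V E \<longleftrightarrow> finite V \<and> V \<noteq> {} \<and>
     (\<forall>u v. E u v \<longrightarrow> u \<in> V \<and> v \<in> V \<and> u \<noteq> v \<and> E v u) \<and>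
     (\<forall>u\<in>V. \<forall>v\<in>V. E\<^sup>*\<^sup>* u v)"

definition tx :: "drip \<Rightarrow> (nat \<Rightarrow> nat nstate) \<Rightarrow> nat \<Rightarrow> nat option" where
  "tx D s u = (case s u of
      Awake h \<Rightarrow> (case D h of Transmit m \<Rightarrow> Some m | _ \<Rightarrow> None)
    | _ \<Rightarrow> None)"

definition heard :: "drip \<Rightarrow> (nat \<Rightarrow> nat \<Rightarrow> bool) \<Rightarrow> (nat \<Rightarrow> nat nstate) \<Rightarrow> nat \<Rightarrow> nat hent" where
  "heard D E s v =
     (let T = {u. E v u \<and> tx D s u \<noteq> None} in
      if card T = 0 then HEmpty
      else if card T = 1 then HMsg (the (tx D s (the_elem T)))
      else HColl)"

(* one global round r: s = states after round r-1 (all Asleep before round 0) *)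
definition step :: "drip \<Rightarrow> (nat \<Rightarrow> nat \<Rightarrow> bool) \<Rightarrow> (nat \<Rightarrow> nat) \<Rightarrow> nat
                     \<Rightarrow> (nat \<Rightarrow> nat nstate) \<Rightarrow> nat \<Rightarrow> nat nstate" where
  "step D E t r s v = (case s v of
      Asleep \<Rightarrow>
        (case heard D E s v of
           HMsg m \<Rightarrow> (if r \<le> t v then Awake [HMsg m] else Asleep)
         | _ \<Rightarrow> (if r = t v then Awake [HEmpty] else Asleep))
    | Awake h \<Rightarrow>
        (case D h of
           Listen \<Rightarrow> Awake (h @ [heard D E s v])
         | Transmit m \<Rightarrow> Awake (h @ [HEmpty])
         | Terminate \<Rightarrow> Done (h @ [HEmpty]))
    | Done h \<Rightarrow> Done h)"

fun exec :: "drip \<Rightarrow> (nat \<Rightarrow> nat \<Rightarrow> bool) \<Rightarrow> (nat \<Rightarrow> nat) \<Rightarrow> nat \<Rightarrow> nat \<Rightarrow> nat nstate" where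
  "exec D E t 0 = step D E t 0 (\<lambda>_. Asleep)"
| "exec D E t (Suc r) = step D E t (Suc r) (exec D E t r)"

definition elects :: "drip \<Rightarrow> decision \<Rightarrow> nat set \<Rightarrow> (nat \<Rightarrow> nat \<Rightarrow> bool) \<Rightarrow> (nat \<Rightarrow> nat) \<Rightarrow> bool" where
  "elects D f V E t \<longleftrightarrow>
     (\<exists>r hs. (\<forall>v\<in>V. exec D E t r v = Done (hs v)) \<and> card {v\<in>V. f (hs v)} = 1)"

definition feasible :: "nat set \<Rightarrow> (nat \<Rightarrow> nat \<Rightarrow> bool) \<Rightarrow> (nat \<Rightarrow> nat) \<Rightarrow> bool" where
  "feasible V E t \<longleftrightarrow> (\<exists>D f. elects D f V E t)"

end

theory Submission
  imports Defs
begin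


lemma heard_list:
  assumes "distinct us" "\<And>u. E v u \<longleftrightarrow> u \<in> set us"
  shows "heard D E s v = (case filter (\<lambda>u. tx D s u \<noteq> None) us of [] \<Rightarrow> HEmpty
           | [u] \<Rightarrow> HMsg (the (tx D s u)) | _ \<Rightarrow> HColl)"
proof -
  let ?P = "\<lambda>u. tx D s u \<noteq> None"
  have T: "{u. E v u \<and> tx D s u \<noteq> None} = set (filter ?P us)" using assms(2) by auto
  have c: "card (set (filter ?P us)) = length (filter ?P us)"
    by (rule distinct_card) (simp add: assms(1))
  show ?thesis
  proof (cases "filter ?P us")
    case Nil then show ?thesis unfolding heard_def Let_def T using c by simp
  next
    case (Cons u rest)
    show ?thesis
    proof (cases rest)
      case Nil
      then show ?thesis unfolding heard_def Let_def T using c Cons by simp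
    next
      case (Cons u2 rest2)
      have cc: "card (set (u # u2 # rest2)) = Suc (Suc (length rest2))"
        using c unfolding \<open>filter ?P us = u # rest\<close> Cons by simp
      show ?thesis unfolding heard_def Let_def T \<open>filter ?P us = u # rest\<close> Cons
        using cc by simp
    qed
  qed
qed

lemma step_local:
  assumes loc: "\<And>u. E v u \<Longrightarrow> u < n" and eq: "\<And>u. u < n \<Longrightarrow> s u = s' u" and v: "v < n"
  shows "step D E t r s v = step D E t r s' v"
proof -
  have "{u. E v u \<and> tx D s u \<noteq> None} = {u. E v u \<and> tx D s' u \<noteq> None}"
    using loc eq by (auto simp: tx_def)
  moreover have "\<And>u. u < n \<Longrightarrow> tx D s u = tx D s' u" using eq by (simp add: tx_def)
  ultimately have H: "heard D E s v = heard D E s' v"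
    unfolding heard_def Let_def
    by (smt (verit) One_nat_def card_1_singletonE loc mem_Collect_eq singletonI the_elem_eq)
  show ?thesis unfolding step_def H eq[OF v] by (rule refl)
qed

lemma exec_closed:
  assumes loc: "\<And>u v. E u v \<Longrightarrow> u < n \<and> v < n"
  and base: "\<And>v. v < n \<Longrightarrow> step D E t 0 (\<lambda>_. Asleep) v = S 0 v"
  and stp: "\<And>r v. v < n \<Longrightarrow> step D E t (Suc r) (S r) v = S (Suc r) v"
  shows "v < n \<Longrightarrow> exec D E t r v = S r v"
proof (induction r arbitrary: v)
  case 0 then show ?case using base by simp
next
  case (Suc r)
  have "exec D E t (Suc r) v = step D E t (Suc r) (exec D E t r) v" by simp
  also have "\<dots> = step D E t (Suc r) (S r) v"
    by (rule step_local[where n=n]) (use loc Suc in auto)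
  also have "\<dots> = S (Suc r) v" using stp Suc by simp
  finally show ?case .
qed

lemma step_twin:
  assumes "s u = s v" "t u = t v" "\<And>x. x \<noteq> u \<Longrightarrow> x \<noteq> v \<Longrightarrow> (E u x \<longleftrightarrow> E v x)"
    "\<not> E u u" "\<not> E v v"
  shows "step D E t r s u = step D E t r s v"
proof -
  have H: "heard D E s u = heard D E s v" if "tx D s u = None"
  proof -
    have "tx D s v = None" using that assms(1) by (simp add: tx_def)
    have "{x. E u x \<and> tx D s x \<noteq> None} = {x. E v x \<and> tx D s x \<noteq> None}"
    proof (intro set_eqI iffI)
      fix x assume "x \<in> {x. E u x \<and> tx D s x \<noteq> None}"
      then show "x \<in> {x. E v x \<and> tx D s x \<noteq> None}"
        using that \<open>tx D s v = None\<close> assms(3-5) by (cases "x = u \<or> x = v") auto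
    next
      fix x assume "x \<in> {x. E v x \<and> tx D s x \<noteq> None}"
      then show "x \<in> {x. E u x \<and> tx D s x \<noteq> None}"
        using that \<open>tx D s v = None\<close> assms(3-5) by (cases "x = u \<or> x = v") auto
    qed
    then show ?thesis unfolding heard_def by simp
  qed
  show ?thesis
  proof (cases "s u")
    case Asleep
    then have "tx D s u = None" by (simp add: tx_def)
    show ?thesis unfolding step_def H[OF \<open>tx D s u = None\<close>] assms(1,2) by (rule refl)
  next
    case (Awake h)
    show ?thesis
    proof (cases "D h")
      case Listen
      then have "tx D s u = None" using Awake by (simp add: tx_def)
      show ?thesis unfolding step_def H[OF \<open>tx D s u = None\<close>] assms(1,2) by (rule refl)
    qed (use Awake assms(1) in \<open>simp_all add: step_def\<close>)
  next
    case (Done h) then show ?thesis using assms(1) by (simp add: step_def)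
  qed
qed

lemma exec_Done: "exec D E t r v = Done h \<Longrightarrow> exec D E t (Suc r) v = Done h"
  by (simp add: step_def)

lemma exec_Done_le:
  assumes "exec D E t r v = Done h" "r \<le> r'" shows "exec D E t r' v = Done h"
  using assms(2)
proof (induction r' rule: dec_induct)
  case base then show ?case using assms(1) .
next
  case (step n) then show ?case using exec_Done by blast
qed



definition EK :: "nat \<Rightarrow> nat \<Rightarrow> bool" where "EK u v \<longleftrightarrow> u < 4 \<and> v < 4 \<and> u \<noteq> v"
definition EG :: "nat \<Rightarrow> nat \<Rightarrow> bool" where
  "EG u v \<longleftrightarrow> EK u v \<and> \<not>(u = 2 \<and> v = 3) \<and> \<not>(u = 3 \<and> v = 2)"
definition V4 :: "nat set" where "V4 = {0,1,2,3}"
definition tK :: "nat \<Rightarrow> nat" where "tK v = (if v = 3 then 1 else 0)"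
definition tG :: "nat \<Rightarrow> nat \<Rightarrow> nat \<Rightarrow> nat" where
  "tG a b v = (if v = 3 then a else if v = 2 then b else 0)"

lemma lt4: "(v::nat) < 4 \<longleftrightarrow> v = 0 \<or> v = 1 \<or> v = 2 \<or> v = 3" by auto

lemma EK_loc: "EK u v \<Longrightarrow> u < 4 \<and> v < 4" by (simp add: EK_def)
lemma EG_loc: "EG u v \<Longrightarrow> u < 4 \<and> v < 4" by (simp add: EG_def EK_def)

abbreviation hl :: "drip \<Rightarrow> (nat \<Rightarrow> nat nstate) \<Rightarrow> nat list \<Rightarrow> nat hent" where
  "hl D s us \<equiv> (case filter (\<lambda>u. tx D s u \<noteq> None) us of [] \<Rightarrow> HEmpty
           | [u] \<Rightarrow> HMsg (the (tx D s u)) | _ \<Rightarrow> HColl)"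

lemma hK0: "heard D EK s 0 = hl D s [1,2,3]" by (rule heard_list) (auto simp: EK_def)
lemma hK1: "heard D EK s 1 = hl D s [0,2,3]" by (rule heard_list) (auto simp: EK_def)
lemma hK2: "heard D EK s 2 = hl D s [0,1,3]" by (rule heard_list) (auto simp: EK_def)
lemma hK3: "heard D EK s 3 = hl D s [0,1,2]" by (rule heard_list) (auto simp: EK_def)
lemma hG0: "heard D EG s 0 = hl D s [1,2,3]" by (rule heard_list) (auto simp: EG_def EK_def)
lemma hG1: "heard D EG s 1 = hl D s [0,2,3]" by (rule heard_list) (auto simp: EG_def EK_def)
lemma hG2: "heard D EG s 2 = hl D s [0,1]" by (rule heard_list) (auto simp: EG_def EK_def)
lemma hG3: "heard D EG s 3 = hl D s [0,1]" by (rule heard_list) (auto simp: EG_def EK_def)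

lemma hK1': "heard D EK s (Suc 0) = hl D s [0,2,3]" using hK1 by simp
lemma hG1': "heard D EG s (Suc 0) = hl D s [0,2,3]" using hG1 by simp

lemma config_K: "config V4 EK"
  unfolding config_def V4_def
proof (intro conjI ballI allI impI)
  fix u v assume "u \<in> {0::nat,1,2,3}" "v \<in> {0::nat,1,2,3}"
  then show "EK\<^sup>*\<^sup>* u v"
    by (cases "u = v") (auto simp: EK_def intro: r_into_rtranclp)
qed (auto simp: EK_def)

lemma config_G: "config V4 EG"
  unfolding config_def V4_def
proof (intro conjI ballI allI impI)
  fix u v assume u: "u \<in> {0::nat,1,2,3}" and v: "v \<in> {0::nat,1,2,3}"
  have e: "EG\<^sup>*\<^sup>* x y" if "EG x y" for x y using that by (rule r_into_rtranclp)
  have e20: "EG 2 0" "EG 0 3" "EG 3 0" "EG 0 2" by (auto simp: EG_def EK_def)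
  have "EG\<^sup>*\<^sup>* 2 3" using e20 by (meson rtranclp.rtrancl_into_rtrancl e)
  moreover have "EG\<^sup>*\<^sup>* 3 2" using e20 by (meson rtranclp.rtrancl_into_rtrancl e)
  ultimately show "EG\<^sup>*\<^sup>* u v" using u v
    by (cases "u = v") (auto simp: EG_def EK_def intro: r_into_rtranclp)
qed (auto simp: EG_def EK_def)

lemma card_V4: "card V4 = 4" by (simp add: V4_def)



definition DK :: drip where
  "DK h = (if length h = 1 then Transmit 0 else if h = [HEmpty,HEmpty,HMsg 0] then Transmit 0
           else if length h \<ge> 3 then Terminate else Listen)"

definition fK :: decision where "fK h = (h = [HEmpty,HEmpty,HColl,HEmpty])"

definition XK :: "nat \<Rightarrow> nat nstate" where
  "XK r = (if r = 0 then Awake [HEmpty] else if r = 1 then Awake [HEmpty,HEmpty]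
     else if r = 2 then Awake [HEmpty,HEmpty,HMsg 0] else if r = 3 then Awake [HEmpty,HEmpty,HMsg 0,HEmpty]
     else Done [HEmpty,HEmpty,HMsg 0,HEmpty,HEmpty])"
definition WK :: "nat \<Rightarrow> nat nstate" where
  "WK r = (if r = 0 then Asleep else if r = 1 then Awake [HEmpty]
     else if r = 2 then Awake [HEmpty,HEmpty] else if r = 3 then Awake [HEmpty,HEmpty,HColl]
     else Done [HEmpty,HEmpty,HColl,HEmpty])"
definition SK :: "nat \<Rightarrow> nat \<Rightarrow> nat nstate" where
  "SK r v = (if v = 3 then WK r else XK r)"

lemma runK: "v < 4 \<Longrightarrow> exec DK EK tK r v = SK r v"
proof (rule exec_closed[where n=4])
  show "EK u v \<Longrightarrow> u < 4 \<and> v < 4" for u v by (rule EK_loc)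
next
  fix v :: nat assume "v < 4"
  then show "step DK EK tK 0 (\<lambda>_. Asleep) v = SK 0 v"
    unfolding lt4 by (elim disjE) (simp_all add: step_def hK0 hK1 hK1' hK2 hK3 tx_def SK_def XK_def WK_def tK_def)
next
  fix r v :: nat assume "v < 4"
  consider "r = 0" | "r = 1" | "r = 2" | "r = 3" | "r \<ge> 4" by linarith
  then show "step DK EK tK (Suc r) (SK r) v = SK (Suc r) v"
    using \<open>v < 4\<close> unfolding lt4
    by cases (elim disjE; simp add: step_def hK0 hK1 hK1' hK2 hK3 tx_def SK_def XK_def WK_def tK_def DK_def)+
qed

lemma elects_K: "elects DK fK V4 EK tK"
  unfolding elects_def
proof (intro exI conjI)
  let ?hs = "\<lambda>v. if v = 3 then [HEmpty,HEmpty,HColl,HEmpty] else [HEmpty,HEmpty,HMsg 0,HEmpty,HEmpty]"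
  show "\<forall>v\<in>V4. exec DK EK tK 4 v = Done (?hs v)"
    unfolding V4_def using runK by (auto simp: SK_def XK_def WK_def)
  have "{v \<in> V4. fK (?hs v)} = {3}" unfolding V4_def fK_def by auto
  then show "card {v \<in> V4. fK (?hs v)} = 1" by simp
qed

lemma feasible_K: "feasible V4 EK tK"
  unfolding feasible_def using elects_K by blast



lemma rep_snoc: "replicate n x @ [x] = x # replicate n x" by (induction n) auto

definition cM :: "nat hent list \<Rightarrow> nat" where "cM h = length (filter (\<lambda>x. x = HMsg 0) h)"

definition DG :: "nat \<Rightarrow> nat \<Rightarrow> drip" where
  "DG a b h = (if length h = 1 then Transmit 0 else if HColl \<in> set h then Terminate
     else if cM h = 1 \<and> length h = a + 2 then Transmit 0
     else if cM h = 2 \<and> length h = b + 3 then Transmit 0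
     else if cM h = 2 \<and> length h = b + 4 then Terminate else Listen)"

definition fG :: decision where "fG h = (h = [HEmpty,HEmpty,HColl,HEmpty])"

definition XG :: "nat \<Rightarrow> nat \<Rightarrow> nat \<Rightarrow> nat nstate" where
  "XG a b r = (if r \<le> a then Awake (replicate (Suc r) HEmpty)
     else if r \<le> b then Awake (replicate (Suc a) HEmpty @ HMsg 0 # replicate (r - Suc a) HEmpty)
     else if r < b + 4 then Awake (replicate (Suc a) HEmpty @ HMsg 0 # replicate (b - Suc a) HEmpty
                                  @ HMsg 0 # replicate (r - Suc b) HEmpty)
     else Done (replicate (Suc a) HEmpty @ HMsg 0 # replicate (b - Suc a) HEmpty
                                  @ HMsg 0 # replicate 3 HEmpty))"
definition ZG :: "nat \<Rightarrow> nat \<Rightarrow> nat nstate" where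
  "ZG a r = (if r < a then Asleep else if r = a then Awake [HEmpty]
     else if r = a + 1 then Awake [HEmpty,HEmpty] else if r = a + 2 then Awake [HEmpty,HEmpty,HColl]
     else Done [HEmpty,HEmpty,HColl,HEmpty])"
definition WG :: "nat \<Rightarrow> nat \<Rightarrow> nat nstate" where
  "WG b r = (if r < b then Asleep else if r = b then Awake [HEmpty]
     else if r = b + 1 then Awake [HEmpty,HEmpty] else if r = b + 2 then Awake [HEmpty,HEmpty,HEmpty]
     else if r = b + 3 then Awake [HEmpty,HEmpty,HEmpty,HColl]
     else Done [HEmpty,HEmpty,HEmpty,HColl,HEmpty])"
definition SG :: "nat \<Rightarrow> nat \<Rightarrow> nat \<Rightarrow> nat \<Rightarrow> nat nstate" where
  "SG a b r v = (if v = 3 then ZG a r else if v = 2 then WG b r else XG a b r)"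

context fixes a b :: nat assumes a1: "1 \<le> a" and ab: "a + 3 \<le> b"
begin

lemma txX: "v \<noteq> 2 \<Longrightarrow> v \<noteq> 3 \<Longrightarrow> tx (DG a b) (SG a b r) v = (if r = 0 \<or> r = a + 1 \<or> r = b + 2 then Some 0 else None)"
proof -
  assume v: "v \<noteq> 2" "v \<noteq> 3"
  consider "r = 0" | "1 \<le> r \<and> r \<le> a" | "r = a + 1" | "a + 2 \<le> r \<and> r \<le> b" | "r = b + 1" | "r = b + 2"
     | "r = b + 3" | "r \<ge> b + 4" by linarith
  then show ?thesis using a1 ab v
    by cases (simp_all add: tx_def SG_def XG_def DG_def cM_def)
qed

lemma txZ: "tx (DG a b) (SG a b r) 3 = (if r = a then Some 0 else None)"
  using a1 ab by (simp add: tx_def SG_def ZG_def DG_def cM_def)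

lemma txW: "tx (DG a b) (SG a b r) 2 = (if r = b then Some 0 else None)"
  using a1 ab by (simp add: tx_def SG_def WG_def DG_def cM_def)

lemma disj_events: "r = a \<Longrightarrow> r \<noteq> 0 \<and> r \<noteq> a + 1 \<and> r \<noteq> b + 2 \<and> r \<noteq> b"
  "r = b \<Longrightarrow> r \<noteq> 0 \<and> r \<noteq> a + 1 \<and> r \<noteq> b + 2 \<and> r \<noteq> a"
  using a1 ab by auto

lemma hX0: "heard (DG a b) EG (SG a b r) 0 =
   (if r = 0 \<or> r = a + 1 \<or> r = b + 2 \<or> r = a \<or> r = b then HMsg 0 else HEmpty)"
  unfolding hG0 using a1 ab by (simp add: txX txZ txW)
lemma hX1: "heard (DG a b) EG (SG a b r) (Suc 0) =
   (if r = 0 \<or> r = a + 1 \<or> r = b + 2 \<or> r = a \<or> r = b then HMsg 0 else HEmpty)"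
  unfolding hG1' using a1 ab by (simp add: txX txZ txW)
lemma hZ: "heard (DG a b) EG (SG a b r) 3 = (if r = 0 \<or> r = a + 1 \<or> r = b + 2 then HColl else HEmpty)"
  unfolding hG3 using a1 ab by (simp add: txX)
lemma hW: "heard (DG a b) EG (SG a b r) 2 = (if r = 0 \<or> r = a + 1 \<or> r = b + 2 then HColl else HEmpty)"
  unfolding hG2 using a1 ab by (simp add: txX)

lemma rep23: "replicate 2 x = [x,x]" "replicate 3 x = [x,x,x]" by (simp_all add: numeral_eq_Suc)

lemma stepG: "v < 4 \<Longrightarrow> step (DG a b) EG (tG a b) (Suc r) (SG a b r) v = SG a b (Suc r) v"
proof -
  assume "v < 4"
  have "r = 0 \<or> (1 \<le> r \<and> Suc r < a) \<or> Suc r = a \<or> r = a \<or> r = a + 1 \<or> r = a + 2 \<or>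
     (a + 3 \<le> r \<and> Suc r < b) \<or> Suc r = b \<or> r = b \<or> r = b + 1
     \<or> r = b + 2 \<or> r = b + 3 \<or> r \<ge> b + 4" using a1 ab by arith
  then consider "r = 0" | "1 \<le> r \<and> Suc r < a" | "Suc r = a" | "r = a" | "r = a + 1" | "r = a + 2" |
     "a + 3 \<le> r \<and> Suc r < b" | "Suc r = b" | "r = b" | "r = b + 1"
     | "r = b + 2" | "r = b + 3" | "r \<ge> b + 4" by blast
  note cr = this
  have bs: "b - Suc a = Suc (r - Suc a)" if "Suc r = b" using that ab by arith
  have sd: "r - a = Suc (r - Suc a)" if "a < r" for r using that by arith
  from \<open>v < 4\<close> consider "v = 0" | "v = 1" | "v = 2" | "v = 3" unfolding lt4 by blast
  then show ?thesis
  proof cases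
    case 1 show ?thesis using cr a1 ab 1
      by cases (simp_all add: step_def hX0 hX1 hZ hW SG_def XG_def ZG_def WG_def DG_def cM_def tG_def rep_snoc sd rep23 bs)
  next
    case 2 show ?thesis using cr a1 ab 2
      by cases (simp_all add: step_def hX0 hX1 hZ hW SG_def XG_def ZG_def WG_def DG_def cM_def tG_def rep_snoc sd rep23 bs)
  next
    case 3 show ?thesis using cr a1 ab 3
      by cases (simp_all add: step_def hX0 hX1 hZ hW SG_def XG_def ZG_def WG_def DG_def cM_def tG_def rep_snoc sd rep23 bs)
  next
    case 4 show ?thesis using cr a1 ab 4
      by cases (simp_all add: step_def hX0 hX1 hZ hW SG_def XG_def ZG_def WG_def DG_def cM_def tG_def rep_snoc sd rep23 bs)
  qed
qed

lemma runG: "v < 4 \<Longrightarrow> exec (DG a b) EG (tG a b) r v = SG a b r v"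
proof (rule exec_closed[where n=4])
  show "EG u v \<Longrightarrow> u < 4 \<and> v < 4" for u v by (rule EG_loc)
next
  fix v :: nat assume "v < 4"
  then show "step (DG a b) EG (tG a b) 0 (\<lambda>_. Asleep) v = SG a b 0 v"
    using a1 ab unfolding lt4
    by (elim disjE) (simp_all add: step_def hG0 hG1' hG2 hG3 tx_def SG_def XG_def ZG_def WG_def tG_def)
next
  fix r v :: nat assume "v < 4"
  then show "step (DG a b) EG (tG a b) (Suc r) (SG a b r) v = SG a b (Suc r) v" by (rule stepG)
qed

lemma elects_G: "elects (DG a b) fG V4 EG (tG a b)"
  unfolding elects_def
proof (intro exI conjI)
  let ?hs = "\<lambda>v. if v = 3 then [HEmpty,HEmpty,HColl,HEmpty] else if v = 2 then [HEmpty,HEmpty,HEmpty,HColl,HEmpty]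
     else replicate (Suc a) HEmpty @ HMsg 0 # replicate (b - Suc a) HEmpty @ HMsg 0 # replicate 3 HEmpty"
  show "\<forall>v\<in>V4. exec (DG a b) EG (tG a b) (b + 4) v = Done (?hs v)"
    unfolding V4_def using runG a1 ab by (auto simp: SG_def XG_def ZG_def WG_def)
  have "{v \<in> V4. fG (?hs v)} = {3}" unfolding V4_def fG_def by (auto simp: rep23)
  then show "card {v \<in> V4. fG (?hs v)} = 1" by simp
qed

end

lemma feasible_G: "1 \<le> a \<Longrightarrow> a + 3 \<le> b \<Longrightarrow> feasible V4 EG (tG a b)"
  unfolding feasible_def using elects_G by blast



definition lateS :: "nat \<Rightarrow> nat \<Rightarrow> nat \<Rightarrow> nat nstate" where
  "lateS L tg r = (if r < tg then Asleep else if r < tg + L then Awake (replicate (Suc (r - tg)) HEmpty)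
     else Done (replicate (Suc L) HEmpty))"

lemma heard_asleep: "heard D E (\<lambda>_. Asleep) v = HEmpty"
  unfolding heard_def tx_def by simp

lemma hl_pair: "tx D s 0 = tx D s 1 \<Longrightarrow> hl D s [0,1] \<noteq> HMsg m"
  by (cases "tx D s 0") auto

lemma hl_pair': "tx D s 0 = tx D s (Suc 0) \<Longrightarrow> hl D s [0,1] \<noteq> HMsg m"
  using hl_pair by simp

lemma lateS_step:
  assumes L1: "1 \<le> L" and LT: "D (replicate L HEmpty) = Terminate"
  and NT: "\<forall>j. 1 \<le> j \<and> j < L \<longrightarrow> D (replicate j HEmpty) \<noteq> Terminate"
  and sv: "s v = lateS L tg r" and tv: "t v = tg"
  and hs: "r < tg \<Longrightarrow> \<forall>m. heard D E s v \<noteq> HMsg m"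
  and hl: "tg \<le> r \<Longrightarrow> r < tg + L \<Longrightarrow> D (replicate (Suc (r - tg)) HEmpty) = Listen \<Longrightarrow> heard D E s v = HEmpty"
  shows "step D E t (Suc r) s v = lateS L tg (Suc r)"
proof -
  consider "Suc r < tg" | "Suc r = tg" | "tg \<le> r \<and> Suc (r - tg) < L" | "tg \<le> r \<and> Suc (r - tg) = L" | "tg + L \<le> r"
    by linarith
  then show ?thesis
  proof cases
    case 1
    then show ?thesis using hs sv tv unfolding step_def lateS_def
      by (cases "heard D E s v") auto
  next
    case 2
    then show ?thesis using hs sv tv L1 unfolding step_def lateS_def
      by (cases "heard D E s v") auto
  next
    case 3
    then have nt: "D (replicate (Suc (r - tg)) HEmpty) \<noteq> Terminate" using NT by auto
    have sv': "s v = Awake (replicate (Suc (r - tg)) HEmpty)" using sv 3 unfolding lateS_def by auto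
    have e: "replicate (Suc (r - tg)) HEmpty @ [HEmpty] = replicate (Suc (Suc r - tg)) HEmpty"
      using 3 by (simp add: Suc_diff_le replicate_append_same)
    show ?thesis
    proof (cases "D (replicate (Suc (r - tg)) HEmpty)")
      case Listen
      then show ?thesis using hl 3 sv' e unfolding step_def lateS_def by auto
    next
      case (Transmit m)
      then show ?thesis using 3 sv' e unfolding step_def lateS_def by auto
    next
      case Terminate then show ?thesis using nt by simp
    qed
  next
    case 4
    have sv': "s v = Awake (replicate L HEmpty)" using sv 4 unfolding lateS_def by auto
    have e: "replicate L HEmpty @ [HEmpty] = replicate (Suc L) HEmpty"
      by (simp add: replicate_append_same)
    show ?thesis using 4 sv' LT e unfolding step_def lateS_def by auto
  next
    case 5
    then show ?thesis using sv unfolding step_def lateS_def by auto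
  qed
qed

lemma tx_lateS_none: "r < tg \<or> tg + L \<le> r \<Longrightarrow> s u = lateS L tg r \<Longrightarrow> tx D s u = None"
  unfolding tx_def lateS_def by auto

lemma caseA:
  assumes L1: "1 \<le> L" and LT: "D (replicate L HEmpty) = Terminate"
  and NT: "\<forall>j. 1 \<le> j \<and> j < L \<longrightarrow> D (replicate j HEmpty) \<noteq> Terminate"
  shows "\<not> elects D f V4 EG (tG (L+1) (L+4))"
proof -
  let ?t = "tG (L+1) (L+4)"
  let ?S = "\<lambda>r v. lateS L (?t v) r"
  have run: "exec D EG ?t r v = ?S r v" if "v < 4" for r v
  proof (rule exec_closed[where n=4, OF _ _ _ that])
    show "EG u v \<Longrightarrow> u < 4 \<and> v < 4" for u v by (rule EG_loc)
  next
    fix v :: nat assume "v < 4"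
    show "step D EG ?t 0 (\<lambda>_. Asleep) v = ?S 0 v"
      using L1 unfolding step_def heard_asleep lateS_def by simp
  next
    fix r v :: nat assume "v < 4"
    let ?s = "?S r"
    have t01: "tx D ?s 0 = tx D ?s (Suc 0)" by (simp add: tx_def tG_def)
    have after: "tx D ?s u = None" if "u = 0 \<or> u = 1" "L \<le> r" for u
      by (rule tx_lateS_none[of r 0 L]) (use that in \<open>auto simp: tG_def\<close>)
    from \<open>v < 4\<close> consider "v = 0" | "v = 1" | "v = 2" | "v = 3" unfolding lt4 by blast
    then show "step D EG ?t (Suc r) ?s v = ?S (Suc r) v"
    proof cases
      case 1
      show ?thesis
      proof (rule lateS_step[OF L1 LT NT])
        show "?s v = lateS L (?t v) r" ..
        show "?t v = ?t v" ..
        show "r < ?t v \<Longrightarrow> \<forall>m. heard D EG ?s v \<noteq> HMsg m" using 1 by (simp add: tG_def)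
        assume a: "?t v \<le> r" "r < ?t v + L" "D (replicate (Suc (r - ?t v)) HEmpty) = Listen"
        have "tx D ?s 1 = None" using a 1 by (simp add: tx_def tG_def lateS_def)
        moreover have "tx D ?s 2 = None"
          by (rule tx_lateS_none[of r "L+4" L]) (use a 1 in \<open>auto simp: tG_def\<close>)
        moreover have "tx D ?s 3 = None"
          by (rule tx_lateS_none[of r "L+1" L]) (use a 1 in \<open>auto simp: tG_def\<close>)
        ultimately show "heard D EG ?s v = HEmpty" using 1 by (simp add: hG0)
      qed
    next
      case 2
      show ?thesis
      proof (rule lateS_step[OF L1 LT NT])
        show "?s v = lateS L (?t v) r" ..
        show "?t v = ?t v" ..
        show "r < ?t v \<Longrightarrow> \<forall>m. heard D EG ?s v \<noteq> HMsg m" using 2 by (simp add: tG_def)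
        assume a: "?t v \<le> r" "r < ?t v + L" "D (replicate (Suc (r - ?t v)) HEmpty) = Listen"
        have "tx D ?s 0 = None" using a 2 by (simp add: tx_def tG_def lateS_def)
        moreover have "tx D ?s 2 = None"
          by (rule tx_lateS_none[of r "L+4" L]) (use a 2 in \<open>auto simp: tG_def\<close>)
        moreover have "tx D ?s 3 = None"
          by (rule tx_lateS_none[of r "L+1" L]) (use a 2 in \<open>auto simp: tG_def\<close>)
        ultimately show "heard D EG ?s v = HEmpty" using 2 by (simp add: hG1')
      qed
    next
      case 3
      show ?thesis
      proof (rule lateS_step[OF L1 LT NT])
        show "?s v = lateS L (?t v) r" ..
        show "?t v = ?t v" ..
        show "r < ?t v \<Longrightarrow> \<forall>m. heard D EG ?s v \<noteq> HMsg m"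
          unfolding 3 hG2 using hl_pair'[OF t01] by blast
        assume a: "?t v \<le> r" "r < ?t v + L" "D (replicate (Suc (r - ?t v)) HEmpty) = Listen"
        have "tx D ?s 0 = None" "tx D ?s 1 = None" using a 3 after by (auto simp: tG_def)
        then show "heard D EG ?s v = HEmpty" using 3 by (simp add: hG2)
      qed
    next
      case 4
      show ?thesis
      proof (rule lateS_step[OF L1 LT NT])
        show "?s v = lateS L (?t v) r" ..
        show "?t v = ?t v" ..
        show "r < ?t v \<Longrightarrow> \<forall>m. heard D EG ?s v \<noteq> HMsg m"
          unfolding 4 hG3 using hl_pair'[OF t01] by blast
        assume a: "?t v \<le> r" "r < ?t v + L" "D (replicate (Suc (r - ?t v)) HEmpty) = Listen"
        have "tx D ?s 0 = None" "tx D ?s 1 = None" using a 4 after by (auto simp: tG_def)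
        then show "heard D EG ?s v = HEmpty" using 4 by (simp add: hG3)
      qed
    qed
  qed
  show ?thesis
  proof
    assume "elects D f V4 EG ?t"
    then obtain r hs where d: "\<forall>v\<in>V4. exec D EG ?t r v = Done (hs v)"
      and c: "card {v\<in>V4. f (hs v)} = 1" unfolding elects_def by blast
    have "hs v = replicate (Suc L) HEmpty" if "v \<in> V4" for v
    proof -
      have "v < 4" using that by (auto simp: V4_def)
      then have "lateS L (?t v) r = Done (hs v)" using d that run by metis
      then show ?thesis unfolding lateS_def by (auto split: if_splits)
    qed
    then have "{v\<in>V4. f (hs v)} = (if f (replicate (Suc L) HEmpty) then V4 else {})" by auto
    then show False using c card_V4 by (simp split: if_splits)
  qed
qed



lemma step_eq:
  assumes "s v = s' v" "t v = t' v" "tx D s v = None \<Longrightarrow> heard D E s v = heard D E' s' v"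
  shows "step D E t r s v = step D E' t' r s' v"
proof (cases "s v")
  case Asleep
  then have "tx D s v = None" by (simp add: tx_def)
  show ?thesis unfolding step_def assms(3)[OF \<open>tx D s v = None\<close>] assms(1,2) by (rule refl)
next
  case (Awake h)
  show ?thesis
  proof (cases "D h")
    case Listen
    then have "tx D s v = None" using Awake by (simp add: tx_def)
    show ?thesis unfolding step_def assms(3)[OF \<open>tx D s v = None\<close>] assms(1,2) by (rule refl)
  qed (use Awake assms(1) in \<open>simp_all add: step_def\<close>)
next
  case (Done h) then show ?thesis using assms(1) by (simp add: step_def)
qed

lemma twinK: "exec D EK tK r 1 = exec D EK tK r 0 \<and> exec D EK tK r 2 = exec D EK tK r 0"
proof (induction r)
  case 0
  have "step D EK tK 0 (\<lambda>_. Asleep) 1 = step D EK tK 0 (\<lambda>_. Asleep) 0"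
    by (rule step_twin) (auto simp: EK_def tK_def)
  moreover have "step D EK tK 0 (\<lambda>_. Asleep) 2 = step D EK tK 0 (\<lambda>_. Asleep) 0"
    by (rule step_twin) (auto simp: EK_def tK_def)
  ultimately show ?case by simp
next
  case (Suc r)
  have i1: "exec D EK tK r 1 = exec D EK tK r 0" and i2: "exec D EK tK r 2 = exec D EK tK r 0"
    using Suc.IH by blast+
  have "step D EK tK (Suc r) (exec D EK tK r) 1 = step D EK tK (Suc r) (exec D EK tK r) 0"
    by (rule step_twin[OF i1]) (auto simp: EK_def tK_def)
  moreover have "step D EK tK (Suc r) (exec D EK tK r) 2 = step D EK tK (Suc r) (exec D EK tK r) 0"
    by (rule step_twin[OF i2]) (auto simp: EK_def tK_def)
  ultimately show ?case by simp
qed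

lemma tx_cong: "s u = s' u' \<Longrightarrow> tx D s u = tx D s' u'"
  by (simp add: tx_def)

lemma tx_asleep: "s u = Asleep \<Longrightarrow> tx D s u = None"
  by (simp add: tx_def)

lemma mirror:
  assumes "r < b"
  shows "exec D EG (tG 1 b) r 0 = exec D EK tK r 0 \<and> exec D EG (tG 1 b) r 1 = exec D EK tK r 1 \<and>
         exec D EG (tG 1 b) r 3 = exec D EK tK r 3 \<and> exec D EG (tG 1 b) r 2 = Asleep"
  using assms
proof (induction r)
  case 0
  have s: "step D EG (tG 1 b) 0 (\<lambda>_. Asleep) v = step D EK tK 0 (\<lambda>_. Asleep) v" if "v = 0 \<or> v = 1 \<or> v = 3" for v
    by (rule step_eq) (use that in \<open>auto simp: tG_def tK_def heard_asleep\<close>)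
  have "step D EG (tG 1 b) 0 (\<lambda>_. Asleep) 2 = Asleep"
    using 0 by (simp add: step_def heard_asleep tG_def)
  then show ?case using s by simp
next
  case (Suc r)
  let ?sG = "exec D EG (tG 1 b) r" and ?sK = "exec D EK tK r"
  have IH: "?sG 0 = ?sK 0" "?sG 1 = ?sK 1" "?sG 3 = ?sK 3" "?sG 2 = Asleep" using Suc by auto
  have tw: "?sK 1 = ?sK 0" "?sK 2 = ?sK 0" using twinK by blast+
  have t0: "tx D ?sG 0 = tx D ?sK 0" by (rule tx_cong) (rule IH(1))
  have t1: "tx D ?sG (Suc 0) = tx D ?sK 0" by (rule tx_cong) (use IH(2) tw in simp)
  have t1K: "tx D ?sK (Suc 0) = tx D ?sK 0" by (rule tx_cong) (use tw in simp)
  have t2K: "tx D ?sK 2 = tx D ?sK 0" by (rule tx_cong) (use tw in simp)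
  have t2: "tx D ?sG 2 = None" by (rule tx_asleep) (rule IH(4))
  have t3: "tx D ?sG 3 = tx D ?sK 3" by (rule tx_cong) (rule IH(3))
  have n0: "step D EG (tG 1 b) (Suc r) ?sG 0 = step D EK tK (Suc r) ?sK 0"
  proof (rule step_eq)
    show "?sG 0 = ?sK 0" by (rule IH(1))
    show "tG 1 b 0 = tK 0" by (simp add: tG_def tK_def)
    assume "tx D ?sG 0 = None"
    then show "heard D EG ?sG 0 = heard D EK ?sK 0"
      unfolding hG0 hK0 using t0 t1 t1K t2K t2 t3 by simp
  qed
  have n1: "step D EG (tG 1 b) (Suc r) ?sG 1 = step D EK tK (Suc r) ?sK 1"
  proof (rule step_eq)
    show "?sG 1 = ?sK 1" by (rule IH(2))
    show "tG 1 b 1 = tK 1" by (simp add: tG_def tK_def)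
    assume "tx D ?sG 1 = None"
    then show "heard D EG ?sG 1 = heard D EK ?sK 1"
      unfolding hG1 hK1 using t0 t1 t1K t2K t2 t3 by simp
  qed
  have n3: "step D EG (tG 1 b) (Suc r) ?sG 3 = step D EK tK (Suc r) ?sK 3"
  proof (rule step_eq)
    show "?sG 3 = ?sK 3" by (rule IH(3))
    show "tG 1 b 3 = tK 3" by (simp add: tG_def tK_def)
    show "heard D EG ?sG 3 = heard D EK ?sK 3"
      unfolding hG3 hK3 using t0 t1 t1K t2K by (cases "tx D ?sK 0") simp_all
  qed
  have t01: "tx D ?sG 0 = tx D ?sG (Suc 0)" using t0 t1 by simp
  have "heard D EG ?sG 2 \<noteq> HMsg m" for m unfolding hG2 by (rule hl_pair'[OF t01])
  then have n2: "step D EG (tG 1 b) (Suc r) ?sG 2 = Asleep"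
    using IH(4) Suc.prems by (cases "heard D EG ?sG 2") (auto simp: step_def tG_def)
  show ?case using n0 n1 n2 n3 by simp
qed

lemma caseB:
  assumes NT: "\<forall>j. 1 \<le> j \<longrightarrow> D (replicate j HEmpty) \<noteq> Terminate"
  and eK: "elects D f V4 EK tK"
  shows "\<exists>b. 4 \<le> b \<and> \<not> elects D f V4 EG (tG 1 b)"
proof -
  obtain R hsK where dK: "\<forall>v\<in>V4. exec D EK tK R v = Done (hsK v)"
    using eK unfolding elects_def by blast
  define b where "b = R + 4"
  let ?eG = "exec D EG (tG 1 b)"
  have mR: "?eG R 0 = Done (hsK 0)" "?eG R 1 = Done (hsK 1)"
    using mirror[of R b] dK unfolding b_def V4_def by auto
  have dn: "tx D (?eG r) u = None" if "R \<le> r" "u = 0 \<or> u = 1" for r u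
  proof -
    have "?eG r u = Done (hsK u)" using that exec_Done_le[OF mR(1)] exec_Done_le[OF mR(2)] by auto
    then show ?thesis by (simp add: tx_def)
  qed
  have hz: "heard D EG (?eG r) 2 = HEmpty" if "R \<le> r" for r
    unfolding hG2 using dn[OF that] by simp
  have late: "?eG r 2 = Awake (replicate (Suc (r - b)) HEmpty)" if "b \<le> r" for r
    using that
  proof (induction r rule: dec_induct)
    case base
    have b': "b = Suc (R + 3)" unfolding b_def by simp
    have as: "?eG (R + 3) 2 = Asleep" using mirror[of "R+3" b] unfolding b_def by simp
    have "?eG b 2 = ?eG (Suc (R + 3)) 2" using b' by (rule arg_cong)
    also have "\<dots> = step D EG (tG 1 b) (Suc (R + 3)) (?eG (R + 3)) 2" by (simp only: exec.simps(2))
    also have "\<dots> = Awake [HEmpty]" using as hz[of "R+3"] b' by (simp add: step_def tG_def)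
    finally show ?case by simp
  next
    case (step n)
    have nt: "D (replicate (Suc (n - b)) HEmpty) \<noteq> Terminate" using NT[rule_format, of "Suc (n - b)"] by simp
    have e: "replicate (Suc (n - b)) HEmpty @ [HEmpty] = replicate (Suc (Suc n - b)) HEmpty"
      using step.hyps by (simp add: Suc_diff_le replicate_append_same)
    have "R \<le> n" using step.hyps unfolding b_def by simp
    then show ?case using step.IH nt e hz[of n]
      by (cases "D (replicate (Suc (n - b)) HEmpty)") (simp_all add: step_def)
  qed
  have "\<not> elects D f V4 EG (tG 1 b)"
  proof
    assume "elects D f V4 EG (tG 1 b)"
    then obtain r hs where "\<forall>v\<in>V4. ?eG r v = Done (hs v)" unfolding elects_def by blast
    then have d2: "?eG r 2 = Done (hs 2)" unfolding V4_def by simp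
    show False
    proof (cases "r < b")
      case True then show False using mirror[OF True] d2 by simp
    next
      case False then show False using late[of r] d2 by simp
    qed
  qed
  moreover have "4 \<le> b" unfolding b_def by simp
  ultimately show ?thesis by blast
qed



theorem proposition4:
  shows "\<not> (\<exists>(D::drip) (f::decision). \<forall>V E t.
            config V E \<and> card V = 4 \<and> feasible V E t \<longrightarrow> elects D f V E t)"
proof
  assume "\<exists>(D::drip) (f::decision). \<forall>V E t.
            config V E \<and> card V = 4 \<and> feasible V E t \<longrightarrow> elects D f V E t"
  then obtain D f where U: "\<And>V E t. config V E \<Longrightarrow> card V = 4 \<Longrightarrow> feasible V E t \<Longrightarrow> elects D f V E t"
    by blast
  show False
  proof (cases "\<exists>L. 1 \<le> L \<and> D (replicate L HEmpty) = Terminate")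
    case True
    define L where "L = (LEAST L. 1 \<le> L \<and> D (replicate L HEmpty) = Terminate)"
    have L: "1 \<le> L \<and> D (replicate L HEmpty) = Terminate"
      unfolding L_def using True by (rule LeastI_ex)
    have NT: "\<forall>j. 1 \<le> j \<and> j < L \<longrightarrow> D (replicate j HEmpty) \<noteq> Terminate"
      unfolding L_def using not_less_Least by blast
    have "\<not> elects D f V4 EG (tG (L+1) (L+4))"
      using caseA[of L D f] L NT by blast
    moreover have "elects D f V4 EG (tG (L+1) (L+4))"
      by (rule U[OF config_G card_V4 feasible_G]) simp_all
    ultimately show False by blast
  next
    case False
    then have NT: "\<forall>j. 1 \<le> j \<longrightarrow> D (replicate j HEmpty) \<noteq> Terminate" by blast
    have "elects D f V4 EK tK" by (rule U[OF config_K card_V4 feasible_K])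
    then obtain b where b: "4 \<le> b" "\<not> elects D f V4 EG (tG 1 b)" using caseB[OF NT] by blast
    moreover have "elects D f V4 EG (tG 1 b)"
      by (rule U[OF config_G card_V4 feasible_G]) (use b in simp_all)
    ultimately show False by blast
  qed
qed


end
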